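(* Let $N$ be a finite index set and $\{\xi_i\}_{i\in N}$ random vectors in $\mathbb R^p$, $\xi_i=(\xi_{ik})_{k=1}^p$, with $\mathbf E[\xi_i]=0$ and $\mathbf E[\max_{1\le k\le p}|\xi_{ik}|^2]<\infty$ for all $i$. Suppose $\{\xi_i\}_{i\in N}$ has an undirected graph $G^*=(N,E^* )$ as a dependency graph, and let $d^*_{mx}=\max_{i\in N}|N^*(i)|$ be its maximum degree. Then $$\mathbf E\Big(\max_{1\le k\le p}\Big|\sum_{i\in N}\xi_{ik}\Big|\Big)^2\le(d^*_{mx}+1)^2M_p\sum_{i\in N}\mathbf E\Big(\max_{1\le k\le p}|\xi_{ik}|\Big)^2,$$ where $M_p=\max\{3,\,2e\log p-e\}$.
   Context: For an undirected graph $G^*=(N,E^* )$, $N^*(i)=\{j\in N: ij\in E^*\}$ is the neighborhood of $i$, $N^*(A)=\bigcup_{i\in A}N^*(i)$ and $\overline N^*(A)=N^*(A)\cup A$. $G^*$ is a dependency graph for $\{\xi_i\}_{i\in N}$ if for every $A\subset N$, $(\xi_i)_{i\in A}$ is independent of $(\xi_i)_{i\in N\setminus\overline N^*(A)}$. *)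

theory Defs
  imports "HOL-Probability.Probability"
begin

definition undirected_graph :: "'i set \<Rightarrow> ('i \<Rightarrow> 'i \<Rightarrow> bool) \<Rightarrow> bool" where
  "undirected_graph N E \<longleftrightarrow>
     (\<forall>i j. E i j \<longrightarrow> i \<in> N \<and> j \<in> N) \<and> (\<forall>i j. E i j \<longrightarrow> E j i) \<and> (\<forall>i. \<not> E i i)"

definition nbhd :: "'i set \<Rightarrow> ('i \<Rightarrow> 'i \<Rightarrow> bool) \<Rightarrow> 'i \<Rightarrow> 'i set" where
  "nbhd N E i = {j \<in> N. E i j}"

definition closed_nbhd_set :: "'i set \<Rightarrow> ('i \<Rightarrow> 'i \<Rightarrow> bool) \<Rightarrow> 'i set \<Rightarrow> 'i set" where
  "closed_nbhd_set N E A = (\<Union>i\<in>A. nbhd N E i) \<union> A"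

definition dependency_graph ::
  "'a measure \<Rightarrow> 'i set \<Rightarrow> ('i \<Rightarrow> 'i \<Rightarrow> bool) \<Rightarrow> ('i \<Rightarrow> 'a \<Rightarrow> 'b::topological_space) \<Rightarrow> bool" where
  "dependency_graph M N E \<xi> \<longleftrightarrow> undirected_graph N E \<and>
     (\<forall>A \<subseteq> N. prob_space.indep_var M
        (PiM A (\<lambda>_. borel)) (\<lambda>\<omega>. \<lambda>i\<in>A. \<xi> i \<omega>)
        (PiM (N - closed_nbhd_set N E A) (\<lambda>_. borel))
        (\<lambda>\<omega>. \<lambda>i\<in>N - closed_nbhd_set N E A. \<xi> i \<omega>))"

definition max_degree :: "'i set \<Rightarrow> ('i \<Rightarrow> 'i \<Rightarrow> bool) \<Rightarrow> nat" where
  "max_degree N E = Max ((\<lambda>i. card (nbhd N E i)) ` N)"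

definition M_const :: "nat \<Rightarrow> real" where
  "M_const p = max 3 (2 * exp 1 * ln (real p) - exp 1)"

end

theory Submission
  imports Defs
begin
lemma pow_powr_aux:
  fixes c :: real assumes "c \<ge> 0" "m \<ge> 2"
  shows "(c^(2*m-2)) powr (real m/(real m-1)) = c^(2*m)"
proof (cases "c = 0")
  case True then show ?thesis using assms by (simp add: power_0_left)
next
  case False
  then have c: "c > 0" using assms by simp
  have r: "real (2*m-2) = 2*real m - 2" using assms by (simp add: of_nat_diff)
  have "(c^(2*m-2)) powr (real m/(real m-1)) = (c powr real (2*m-2)) powr (real m/(real m-1))"
    using c by (simp add: powr_realpow)
  also have "\<dots> = c powr ((2*real m - 2) * (real m/(real m-1)))" by (simp add: powr_powr r)
  also have "(2*real m - 2) * (real m/(real m-1)) = real (2*m)" using assms by (simp add: field_simps)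
  also have "c powr real (2*m) = c^(2*m)" by (rule powr_realpow[OF c])
  finally show ?thesis .
qed

lemma holder_aux:
  fixes z y :: "'k \<Rightarrow> real"
  assumes K: "finite K" and m: "m \<ge> 2" and U: "(\<Sum>k\<in>K. z k^(2*m)) > 0"
  shows "(\<Sum>k\<in>K. z k^(2*m)) powr (1/m - 1) * (\<Sum>k\<in>K. z k^(2*m-2) * (y k)^2)
         \<le> (\<Sum>k\<in>K. y k^(2*m)) powr (1/m)"
proof -
  define Uv where "Uv = (\<Sum>k\<in>K. z k^(2*m))"
  define Y where "Y = (\<Sum>k\<in>K. y k^(2*m))"
  have ev: "even (2*m)" "even (2*m-2)" using m by auto
  have Ynn: "Y \<ge> 0" unfolding Y_def using ev by (intro sum_nonneg) (simp add: zero_le_even_power)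
  show ?thesis
  proof (cases "Y = 0")
    case True
    have "\<forall>k\<in>K. y k^(2*m) = 0"
      using True K unfolding Y_def using ev
      by (subst sum_nonneg_eq_0_iff[symmetric]) (auto simp: zero_le_even_power)
    then have "\<forall>k\<in>K. y k = 0" using m by simp
    then show ?thesis by simp
  next
    case False
    then have Y: "Y > 0" using Ynn by simp
    have Upos: "Uv > 0" using U Uv_def by simp
    define a where "a = Uv powr (1/(2*m))"
    define b where "b = Y powr (1/(2*m))"
    have a: "a > 0" "b > 0" using Upos Y by (auto simp: a_def b_def)
    have a2m: "a^(2*m) = Uv"
    proof -
      have "a^(2*m) = a powr real (2*m)" using powr_realpow[OF a(1), of "2*m"] by simp
      also have "\<dots> = Uv" unfolding a_def using Upos m by (simp add: powr_powr)
      finally show ?thesis .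
    qed
    have b2m: "b^(2*m) = Y"
    proof -
      have "b^(2*m) = b powr real (2*m)" using powr_realpow[OF a(2), of "2*m"] by simp
      also have "\<dots> = Y" unfolding b_def using Y m by (simp add: powr_powr)
      finally show ?thesis .
    qed
    define p where "p = real m/(real m - 1)"
    define q where "q = real m"
    have pq: "p > 1" "q > 1" "1/p + 1/q = 1" using m by (auto simp: p_def q_def field_simps)
    have young: "(\<bar>z k\<bar>/a)^(2*m-2) * (y k/b)^2 \<le> (\<bar>z k\<bar>/a)^(2*m)/p + (y k/b)^(2*m)/q" for k
    proof -
      have "(\<bar>z k\<bar>/a)^(2*m-2) * (y k/b)^2 \<le> ((\<bar>z k\<bar>/a)^(2*m-2)) powr p / p + ((y k/b)^2) powr q / q"
        by (rule Youngs_inequality[OF pq]) (use a in auto)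
      also have "((\<bar>z k\<bar>/a)^(2*m-2)) powr p = (\<bar>z k\<bar>/a)^(2*m)"
        unfolding p_def by (rule pow_powr_aux) (use a m in auto)
      also have "((y k/b)^2) powr q = (y k/b)^(2*m)"
      proof (cases "y k = 0")
        case True then show ?thesis using m by (simp add: q_def)
      next
        case False
        then have "(y k/b)^2 > 0" using a by simp
        then have "((y k/b)^2) powr q = ((y k/b)^2)^m" by (simp add: q_def powr_realpow)
        then show ?thesis by (simp add: power_mult)
      qed
      finally show ?thesis .
    qed
    have "(\<Sum>k\<in>K. (\<bar>z k\<bar>/a)^(2*m-2) * (y k/b)^2) \<le> (\<Sum>k\<in>K. (\<bar>z k\<bar>/a)^(2*m)/p + (y k/b)^(2*m)/q)"
      by (rule sum_mono) (rule young)
    also have "\<dots> = (\<Sum>k\<in>K. \<bar>z k\<bar>^(2*m)) / a^(2*m) / p + (\<Sum>k\<in>K. y k^(2*m)) / b^(2*m) / q"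
      by (simp add: sum.distrib sum_divide_distrib power_divide)
    also have "(\<Sum>k\<in>K. \<bar>z k\<bar>^(2*m)) = Uv" unfolding Uv_def using ev by (simp add: power_even_abs)
    also have "Uv / a^(2*m) / p + (\<Sum>k\<in>K. y k^(2*m)) / b^(2*m) / q = 1"
      using a2m b2m Upos Y pq unfolding Y_def by simp
    finally have s1: "(\<Sum>k\<in>K. (\<bar>z k\<bar>/a)^(2*m-2) * (y k/b)^2) \<le> 1" .
    have "(\<Sum>k\<in>K. (\<bar>z k\<bar>/a)^(2*m-2) * (y k/b)^2) = (\<Sum>k\<in>K. z k^(2*m-2) * (y k)^2) / (a^(2*m-2) * b^2)"
      using ev by (simp add: sum_divide_distrib power_divide power_even_abs)
    with s1 have s2: "(\<Sum>k\<in>K. z k^(2*m-2) * (y k)^2) \<le> a^(2*m-2) * b^2"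
      using a by (simp add: divide_le_eq)
    have e1: "Uv powr (1/m - 1) * a^(2*m-2) = 1"
    proof -
      have "Uv powr (1/m - 1) = a powr (2*real m * (1/m - 1))"
        using a2m a by (metis powr_powr powr_realpow of_nat_mult of_nat_numeral)
      moreover have "a^(2*m-2) = a powr (2*real m - 2)" using a m by (simp add: powr_realpow[symmetric] of_nat_diff)
      ultimately have "Uv powr (1/m - 1) * a^(2*m-2) = a powr (2*real m * (1/m - 1) + (2*real m - 2))"
        by (simp add: powr_add)
      also have "2*real m * (1/m - 1) + (2*real m - 2) = 0" using m by (simp add: field_simps)
      finally show ?thesis using a by simp
    qed
    have e2: "b^2 = Y powr (1/m)"
    proof -
      have "b^2 = b powr 2" using a by (simp add: powr_realpow)
      also have "\<dots> = Y powr (1/m)" unfolding b_def using m by (simp add: powr_powr)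
      finally show ?thesis .
    qed
    have "Uv powr (1/m - 1) * (\<Sum>k\<in>K. z k^(2*m-2) * (y k)^2) \<le> Uv powr (1/m - 1) * (a^(2*m-2) * b^2)"
      by (rule mult_left_mono[OF s2]) simp
    also have "\<dots> = Y powr (1/m)" using e1 e2 by (simp add: mult.assoc[symmetric])
    finally show ?thesis unfolding Uv_def Y_def .
  qed
qed

lemma taylor_case:
  fixes x y :: "'k \<Rightarrow> real"
  assumes K: "finite K" and m: "m \<ge> 2"
    and pos: "\<And>t. 0 \<le> t \<Longrightarrow> t \<le> 1 \<Longrightarrow> (\<Sum>k\<in>K. (x k + t * y k)^(2*m)) > 0"
  shows "(\<Sum>k\<in>K. (x k + y k)^(2*m)) powr (1/m)
     \<le> (\<Sum>k\<in>K. x k^(2*m)) powr (1/m)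
        + 2 * (\<Sum>k\<in>K. x k^(2*m)) powr (1/m - 1) * (\<Sum>k\<in>K. x k^(2*m-1) * y k)
        + (2*m-1) * (\<Sum>k\<in>K. y k^(2*m)) powr (1/m)"
proof -
  define u where "u t = (\<Sum>k\<in>K. (x k + t * y k)^(2*m))" for t
  define u1 where "u1 t = (\<Sum>k\<in>K. real (2*m) * (x k + t * y k)^(2*m-1) * y k)" for t
  define u2 where "u2 t = (\<Sum>k\<in>K. real (2*m) * real (2*m-1) * (x k + t * y k)^(2*m-2) * y k * y k)" for t
  have du: "DERIV u t :> u1 t" for t
    unfolding u_def u1_def
    by (auto intro!: derivative_eq_intros DERIV_sum)
  have du1: "DERIV u1 t :> u2 t" for t
  proof -
    have "(2*m-1-1) = 2*m-2" by simp
    then show ?thesis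
    unfolding u1_def u2_def
    by (auto intro!: derivative_eq_intros DERIV_sum)
  qed
  define f0 where "f0 t = u t powr (1/m)" for t
  define f1 where "f1 t = (1/m) * u t powr (1/m - 1) * u1 t" for t
  define f2 where "f2 t = (1/m) * ((1/m - 1) * u t powr (1/m - 2) * u1 t * u1 t + u t powr (1/m - 1) * u2 t)" for t
  define D :: "nat \<Rightarrow> real \<Rightarrow> real" where "D n = (if n = 0 then f0 else if n = 1 then f1 else f2)" for n
  have d0: "DERIV f0 t :> f1 t" if "u t > 0" for t
    unfolding f0_def f1_def using DERIV_fun_powr[OF du that, of "1/m"] by simp
  have d1: "DERIV f1 t :> f2 t" if "u t > 0" for t
  proof -
    have a: "DERIV (\<lambda>t. u t powr (1/m - 1)) t :> (1/m - 1) * u t powr (1/m - 1 - 1) * u1 t"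
      using DERIV_fun_powr[OF du that, of "1/m - 1"] by simp
    have "DERIV (\<lambda>t. (1/m) * (u t powr (1/m - 1) * u1 t)) t :>
        (1/m) * ((1/m - 1) * u t powr (1/m - 1 - 1) * u1 t * u1 t + u t powr (1/m - 1) * u2 t)"
      by (intro DERIV_cmult DERIV_mult[OF a du1, THEN DERIV_cong]) simp
    then show ?thesis unfolding f1_def f2_def by (simp add: mult.assoc)
  qed
  have "\<exists>t. 0 < t \<and> t < 1 \<and> f0 1 = (\<Sum>n<(2::nat). (D n 0 / fact n) * (1 - 0)^n) + (D 2 t / fact 2) * (1 - 0)^2"
  proof (rule Taylor_up)
    show "D 0 = f0" by (simp add: D_def)
    show "\<forall>n t. n < 2 \<and> 0 \<le> t \<and> t \<le> 1 \<longrightarrow> DERIV (D n) t :> D (Suc n) t"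
      using d0 d1 pos unfolding u_def D_def
      by (auto simp: less_2_cases_iff)
  qed auto
  then obtain t where t: "0 < t" "t < 1" "f0 1 = f0 0 + f1 0 + f2 t / 2"
    by (auto simp: D_def numeral_2_eq_2)
  have u0: "u 0 > 0" using pos[of 0] unfolding u_def by simp
  have ut: "u t > 0" using pos[of t] t unfolding u_def by simp
  have "f0 1 = (\<Sum>k\<in>K. (x k + y k)^(2*m)) powr (1/m)" by (simp add: f0_def u_def)
  moreover have "f0 0 = (\<Sum>k\<in>K. x k^(2*m)) powr (1/m)" by (simp add: f0_def u_def)
  moreover have "f1 0 = 2 * (\<Sum>k\<in>K. x k^(2*m)) powr (1/m - 1) * (\<Sum>k\<in>K. x k^(2*m-1) * y k)"
  proof -
    have "u1 0 = 2 * real m * (\<Sum>k\<in>K. x k^(2*m-1) * y k)"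
      unfolding u1_def by (simp add: sum_distrib_left mult.assoc)
    then show ?thesis unfolding f1_def u_def using m by simp
  qed
  moreover have "f2 t \<le> 2 * (2*real m-1) * (\<Sum>k\<in>K. y k^(2*m)) powr (1/m)"
  proof -
    have "(1/m) * ((1/m - 1) * u t powr (1/m - 2) * u1 t * u1 t) \<le> 0"
    proof -
      have "(1/real m - 1) \<le> 0" using m by simp
      moreover have "u t powr (1/m - 2) * u1 t * u1 t \<ge> 0" by (metis mult.assoc mult_nonneg_nonneg powr_ge_zero zero_le_square)
      ultimately have "(1/real m - 1) * (u t powr (1/m - 2) * u1 t * u1 t) \<le> 0" by (rule mult_nonpos_nonneg)
      then show ?thesis using divide_nonpos_nonneg[of _ "real m"] by (simp add: mult.assoc)
    qed
    moreover have "(1/m) * (u t powr (1/m - 1) * u2 t) \<le> 2 * (2*real m-1) * (\<Sum>k\<in>K. y k^(2*m)) powr (1/m)"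
    proof -
      have "u2 t = real (2*m) * real (2*m-1) * (\<Sum>k\<in>K. (x k + t * y k)^(2*m-2) * (y k)^2)"
        unfolding u2_def by (simp add: sum_distrib_left mult.assoc power2_eq_square)
      then have "(1/m) * (u t powr (1/m - 1) * u2 t) = 2 * real (2*m-1) * (u t powr (1/m - 1) * (\<Sum>k\<in>K. (x k + t * y k)^(2*m-2) * (y k)^2))"
        using m by simp
      also have "\<dots> \<le> 2 * real (2*m-1) * (\<Sum>k\<in>K. y k^(2*m)) powr (1/m)"
        using holder_aux[OF K m, of "\<lambda>k. x k + t * y k" y] ut unfolding u_def
        by (intro mult_left_mono) auto
      finally show ?thesis using m by (simp add: of_nat_diff)
    qed
    ultimately show ?thesis unfolding f2_def by (simp add: distrib_left)
  qed
  ultimately show ?thesis using t(3) by linarith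
qed

definition Ufun :: "nat \<Rightarrow> 'k set \<Rightarrow> ('k \<Rightarrow> real) \<Rightarrow> real" where
  "Ufun m K x = (\<Sum>k\<in>K. x k^(2*m))"
definition hh :: "nat \<Rightarrow> 'k set \<Rightarrow> ('k \<Rightarrow> real) \<Rightarrow> real" where
  "hh m K x = Ufun m K x powr (1/m)"
definition gg :: "nat \<Rightarrow> 'k set \<Rightarrow> ('k \<Rightarrow> real) \<Rightarrow> 'k \<Rightarrow> real" where
  "gg m K x k = (if Ufun m K x = 0 then 0 else 2 * Ufun m K x powr (1/m - 1) * x k^(2*m-1))"

lemma pow_even_powr:
  fixes c :: real assumes "m \<ge> 1"
  shows "(c^(2*m)) powr (1/m) = c^2"
proof -
  have "c^(2*m) = \<bar>c\<bar>^(2*m)" by (simp add: power_even_abs)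
  also have "\<dots> = (\<bar>c\<bar>^2)^m" by (simp add: power_mult)
  finally have e: "c^(2*m) = (\<bar>c\<bar>^2)^m" .
  show ?thesis
  proof (cases "c = 0")
    case True then show ?thesis using assms by simp
  next
    case False
    then have "\<bar>c\<bar>^2 > 0" by simp
    then have "((\<bar>c\<bar>^2)^m) powr (1/m) = (\<bar>c\<bar>^2) powr (real m * (1/m))"
      by (simp add: powr_realpow[symmetric] powr_powr)
    also have "\<dots> = c^2" using assms \<open>\<bar>c\<bar>^2 > 0\<close> by simp
    finally show ?thesis using e by simp
  qed
qed

lemma Ufun_nonneg: "Ufun m K x \<ge> 0"
  unfolding Ufun_def by (intro sum_nonneg) (simp add: zero_le_even_power)

lemma Ufun_eq0: "finite K \<Longrightarrow> m \<ge> 1 \<Longrightarrow> Ufun m K x = 0 \<longleftrightarrow> (\<forall>k\<in>K. x k = 0)"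
  unfolding Ufun_def
  by (subst sum_nonneg_eq_0_iff) (auto simp: zero_le_even_power)

lemma hh_nonneg: "hh m K x \<ge> 0" by (simp add: hh_def)

lemma exc_case:
  fixes x y :: "'k \<Rightarrow> real"
  assumes K: "finite K" and m: "m \<ge> 2" and t0: "0 \<le> t0" "t0 \<le> 1"
    and z: "\<And>k. k \<in> K \<Longrightarrow> x k + t0 * y k = 0"
  shows "hh m K (\<lambda>k. x k + y k) \<le> hh m K x + (\<Sum>k\<in>K. gg m K x k * y k) + (2*real m - 1) * hh m K y"
proof -
  define Y where "Y = Ufun m K y"
  define hy where "hy = hh m K y"
  have Y: "Y \<ge> 0" by (simp add: Y_def Ufun_nonneg)
  have hy: "hy = Y powr (1/m)" by (simp add: hy_def Y_def hh_def)
  have ev: "even (2*m)" by simp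
  have xk: "x k = - t0 * y k" if "k \<in> K" for k using z[OF that] by simp
  have A: "hh m K (\<lambda>k. x k + y k) = (1-t0)^2 * hy"
  proof -
    have "Ufun m K (\<lambda>k. x k + y k) = (1-t0)^(2*m) * Y"
      unfolding Ufun_def Y_def sum_distrib_left
    proof (intro sum.cong refl)
      fix k assume k: "k \<in> K"
      have "x k + y k = (1-t0) * y k" using xk[OF k] by (simp add: algebra_simps)
      then show "(x k + y k)^(2*m) = (1-t0)^(2*m) * y k^(2*m)" by (simp add: power_mult_distrib)
    qed
    then have "hh m K (\<lambda>k. x k + y k) = ((1-t0)^(2*m) * Y) powr (1/m)"
      unfolding hh_def by (rule arg_cong)
    also have "\<dots> = ((1-t0)^(2*m)) powr (1/m) * Y powr (1/m)"
      by (rule powr_mult)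
    finally have "hh m K (\<lambda>k. x k + y k) = ((1-t0)^(2*m)) powr (1/m) * Y powr (1/m)" .
    then show ?thesis using pow_even_powr[of m "1-t0"] m hy by simp
  qed
  have Ux: "Ufun m K x = t0^(2*m) * Y"
    unfolding Ufun_def Y_def sum_distrib_left
  proof (intro sum.cong refl)
    fix k assume k: "k \<in> K"
    have "x k^(2*m) = (- t0)^(2*m) * y k^(2*m)" using xk[OF k] by (simp add: power_mult_distrib)
    then show "x k^(2*m) = t0^(2*m) * y k^(2*m)" by simp
  qed
  have B: "hh m K x = t0^2 * hy"
  proof -
    have "hh m K x = (t0^(2*m) * Y) powr (1/m)"
      unfolding hh_def Ux ..
    also have "\<dots> = (t0^(2*m)) powr (1/m) * Y powr (1/m)"
      by (rule powr_mult)
    finally have "hh m K x = (t0^(2*m)) powr (1/m) * Y powr (1/m)" .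
    then show ?thesis using pow_even_powr[of m t0] m hy by simp
  qed
  have G: "(\<Sum>k\<in>K. gg m K x k * y k) = - 2 * t0 * hy"
  proof (cases "Ufun m K x = 0")
    case True
    then have "t0 = 0 \<or> Y = 0" using Ux by (metis mult_eq_0_iff power_eq_0_iff)
    then show ?thesis
    proof
      assume "t0 = 0" then show ?thesis using True by (simp add: gg_def)
    next
      assume "Y = 0" then show ?thesis using True m by (simp add: gg_def hy)
    qed
  next
    case False
    have nz: "t0^(2*m) * Y \<noteq> 0" using False Ux by simp
    have "t0 \<noteq> 0" using nz by (metis mult_zero_left power_0_left m not_numeral_le_zero mult_is_0 zero_neq_numeral)
    moreover have "Y \<noteq> 0" using nz by (metis mult_zero_right)
    ultimately have tp: "t0 > 0" and Yp: "Y > 0" using t0 Y by auto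
    have "(\<Sum>k\<in>K. gg m K x k * y k) = 2 * Ufun m K x powr (1/m - 1) * (\<Sum>k\<in>K. x k^(2*m-1) * y k)"
      using False by (simp add: gg_def sum_distrib_left mult.assoc)
    also have "(\<Sum>k\<in>K. x k^(2*m-1) * y k) = - (t0^(2*m-1) * Y)"
    proof -
      have "(\<Sum>k\<in>K. x k^(2*m-1) * y k) = (\<Sum>k\<in>K. - (t0^(2*m-1) * y k^(2*m)))"
      proof (intro sum.cong refl)
        fix k assume k: "k \<in> K"
        have o: "odd (2*m-1)" using m by simp
        have "x k^(2*m-1) * y k = - (t0^(2*m-1) * (y k^(2*m-1) * y k))"
          using o by (simp add: xk[OF k] power_mult_distrib)
        also have "y k^(2*m-1) * y k = y k^(2*m)"
        proof -
          have "Suc (2*m-1) = 2*m" using m by simp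
          then show ?thesis by (metis power_Suc2)
        qed
        finally show "x k^(2*m-1) * y k = - (t0^(2*m-1) * y k^(2*m))" .
      qed
      then show ?thesis by (simp add: Y_def Ufun_def sum_distrib_left sum_negf)
    qed
    also have "Ufun m K x powr (1/m - 1) = t0 powr (2 - 2*real m) * Y powr (1/m - 1)"
    proof -
      have "Ufun m K x powr (1/m - 1) = (t0^(2*m)) powr (1/m - 1) * Y powr (1/m - 1)"
        unfolding Ux by (rule powr_mult)
      also have "(t0^(2*m)) powr (1/m - 1) = t0 powr (2*real m * (1/m - 1))"
        using tp by (metis powr_powr powr_realpow of_nat_mult of_nat_numeral)
      also have "2*real m * (1/m - 1) = 2 - 2*real m" using m by (simp add: field_simps)
      finally show ?thesis .
    qed
    also have "2 * (t0 powr (2 - 2*real m) * Y powr (1/m - 1)) * - (t0^(2*m-1) * Y)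
        = - 2 * (t0 powr (2 - 2*real m) * t0^(2*m-1)) * (Y powr (1/m - 1) * Y)"
      by (simp add: algebra_simps)
    also have "t0 powr (2 - 2*real m) * t0^(2*m-1) = t0"
    proof -
      have "t0^(2*m-1) = t0 powr (2*real m - 1)" using tp m
        by (simp add: powr_realpow[symmetric] of_nat_diff)
      then show ?thesis using tp by (simp add: powr_add[symmetric])
    qed
    also have "Y powr (1/m - 1) * Y = hy"
    proof -
      have "Y powr (1/m - 1) * Y = Y powr (1/m - 1) * Y powr 1" using Yp by simp
      also have "\<dots> = Y powr (1/m - 1 + 1)" by (rule powr_add[symmetric])
      finally show ?thesis by (simp add: hy)
    qed
    finally show ?thesis by simp
  qed
  have "(1-t0)^2 * hy \<le> t0^2 * hy + - 2 * t0 * hy + (2*real m - 1) * hy"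
  proof -
    have "t0^2 * hy + - 2 * t0 * hy + (2*real m - 1) * hy - (1-t0)^2 * hy = (2*real m - 2) * hy"
      by (simp add: algebra_simps power2_eq_square)
    moreover have "(2*real m - 2) * hy \<ge> 0" using m by (simp add: hy_def hh_nonneg)
    ultimately show ?thesis by linarith
  qed
  then show ?thesis using A B G by (simp add: hy_def)
qed

lemma smooth_m1:
  fixes x y :: "'k \<Rightarrow> real" assumes K: "finite K"
  shows "hh 1 K (\<lambda>k. x k + y k) \<le> hh 1 K x + (\<Sum>k\<in>K. gg 1 K x k * y k) + (2*real 1 - 1) * hh 1 K y"
proof -
  have h1: "hh 1 K z = (\<Sum>k\<in>K. (z k)^2)" for z
    using Ufun_nonneg[of 1 K z] by (simp add: hh_def Ufun_def)
  have g1: "gg 1 K x k = 2 * x k" if "k \<in> K" for k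
  proof (cases "Ufun 1 K x = 0")
    case True then have "x k = 0" using Ufun_eq0[OF K, of 1 x] that by simp
    then show ?thesis using True by (simp add: gg_def)
  qed (simp add: gg_def)
  have "(\<Sum>k\<in>K. gg 1 K x k * y k) = (\<Sum>k\<in>K. 2 * x k * y k)" using g1 by (intro sum.cong) auto
  then show ?thesis unfolding h1
    by (simp add: power2_sum sum.distrib)
qed

lemma smooth:
  fixes x y :: "'k \<Rightarrow> real" assumes K: "finite K" and m: "m \<ge> 1"
  shows "hh m K (\<lambda>k. x k + y k) \<le> hh m K x + (\<Sum>k\<in>K. gg m K x k * y k) + (2*real m - 1) * hh m K y"
proof (cases "m = 1")
  case True then show ?thesis using smooth_m1[OF K] by simp
next
  case False
  then have m2: "m \<ge> 2" using m by simp
  show ?thesis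
  proof (cases "\<forall>t. 0 \<le> t \<and> t \<le> 1 \<longrightarrow> (\<Sum>k\<in>K. (x k + t * y k)^(2*m)) > 0")
    case True
    have Ux: "Ufun m K x > 0" using True[rule_format, of 0] by (simp add: Ufun_def)
    have "(\<Sum>k\<in>K. gg m K x k * y k) = 2 * Ufun m K x powr (1/m - 1) * (\<Sum>k\<in>K. x k^(2*m-1) * y k)"
      using Ux by (simp add: gg_def sum_distrib_left mult.assoc)
    then have G: "(\<Sum>k\<in>K. gg m K x k * y k) = 2 * (\<Sum>k\<in>K. x k^(2*m)) powr (1/m - 1) * (\<Sum>k\<in>K. x k^(2*m-1) * y k)"
      unfolding Ufun_def .
    have pos: "\<And>t. 0 \<le> t \<Longrightarrow> t \<le> 1 \<Longrightarrow> (\<Sum>k\<in>K. (x k + t * y k)^(2*m)) > 0" using True by blast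
    show ?thesis using taylor_case[OF K m2 pos] unfolding hh_def Ufun_def G by linarith
  next
    case False
    then obtain t0 where t0: "0 \<le> t0" "t0 \<le> 1" and le0: "\<not> (\<Sum>k\<in>K. (x k + t0 * y k)^(2*m)) > 0"
      by blast
    have le: "\<not> Ufun m K (\<lambda>k. x k + t0 * y k) > 0" unfolding Ufun_def by (rule le0)
    have U0: "Ufun m K (\<lambda>k. x k + t0 * y k) = 0" using le Ufun_nonneg[of m K "\<lambda>k. x k + t0 * y k"] by linarith
    have zz: "\<forall>k\<in>K. x k + t0 * y k = 0"
      using iffD1[OF Ufun_eq0[OF K m, of "\<lambda>k. x k + t0 * y k"] U0] .
    show ?thesis
    proof (rule exc_case[OF K m2 t0])
      fix k assume "k \<in> K" then show "x k + t0 * y k = 0" using zz by (rule bspec[rotated])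
    qed
  qed
qed

lemma gg_bound:
  fixes x :: "'k \<Rightarrow> real"
  assumes K: "finite K" and k: "k \<in> K" and m: "m \<ge> 1"
  shows "\<bar>gg m K x k\<bar> \<le> 2 * (1 + hh m K x)"
proof (cases "Ufun m K x = 0")
  case True then show ?thesis by (simp add: gg_def hh_nonneg)
next
  case False
  define U where "U = Ufun m K x"
  have Up: "U > 0" using False Ufun_nonneg[of m K x] by (simp add: U_def)
  define a where "a = U powr (1/(2*m))"
  have a: "a > 0" using Up by (simp add: a_def)
  have Ua: "U = a powr (2*real m)" unfolding a_def using Up m by (simp add: powr_powr)
  have a2m: "a^(2*m) = U" using Ua a by (metis powr_realpow of_nat_mult of_nat_numeral)
  have ev: "even (2*m)" by simp
  have "\<bar>x k\<bar>^(2*m) = x k^(2*m)" using ev by (simp add: power_even_abs)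
  also have "\<dots> \<le> U" unfolding U_def Ufun_def
    by (rule member_le_sum[OF k _ K]) (simp add: zero_le_even_power)
  finally have le1: "\<bar>x k\<bar>^(2*m) \<le> a^(2*m)" by (simp only: a2m)
  have sm: "2*m = Suc (2*m-1)" using m by simp
  have "\<bar>x k\<bar>^Suc (2*m-1) \<le> a^Suc (2*m-1)" using le1 by (simp only: sm[symmetric])
  then have xa: "\<bar>x k\<bar> \<le> a" by (rule power_le_imp_le_base[OF _ less_imp_le[OF a]])
  have "\<bar>gg m K x k\<bar> = 2 * U powr (1/m - 1) * \<bar>x k\<bar>^(2*m-1)"
    using False by (simp add: gg_def U_def abs_mult power_abs)
  also have "\<dots> \<le> 2 * U powr (1/m - 1) * a^(2*m-1)"
    using xa by (intro mult_left_mono power_mono) auto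
  also have "U powr (1/m - 1) * a^(2*m-1) = a"
  proof -
    have "U powr (1/m - 1) = a powr (2*real m * (1/m - 1))" using Ua a by (simp add: powr_powr)
    moreover have "a^(2*m-1) = a powr (2*real m - 1)" using a m by (simp add: powr_realpow[symmetric] of_nat_diff)
    ultimately have "U powr (1/m - 1) * a^(2*m-1) = a powr (2*real m * (1/m - 1) + (2*real m - 1))"
      by (simp add: powr_add)
    also have "2*real m * (1/m - 1) + (2*real m - 1) = 1" using m by (simp add: field_simps)
    finally show ?thesis using a by simp
  qed
  then have "2 * U powr (1/m - 1) * a^(2*m-1) = 2 * a" by (simp add: mult.assoc)
  also have "a \<le> 1 + a^2"
  proof -
    have sq: "0 \<le> (a-1)*(a-1)" by simp
    then have "0 \<le> a*a - 2*a + 1" by (simp add: algebra_simps)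
    then show ?thesis using a unfolding power2_eq_square by linarith
  qed
  also have "a^2 = hh m K x"
  proof -
    have "a^2 = a powr 2" using a by (simp add: powr_realpow)
    also have "\<dots> = U powr (1/m)" unfolding a_def using m by (simp add: powr_powr)
    finally show ?thesis by (simp add: hh_def U_def)
  qed
  finally show ?thesis by simp
qed

definition Hv :: "nat \<Rightarrow> real^'p \<Rightarrow> real" where "Hv m x = hh m UNIV (\<lambda>k. x$k)"
definition Gv :: "nat \<Rightarrow> real^'p \<Rightarrow> 'p \<Rightarrow> real" where "Gv m x k = gg m UNIV (\<lambda>k. x$k) k"

lemma Hv_meas[measurable]: "Hv m \<in> borel_measurable borel"
  unfolding Hv_def hh_def Ufun_def by measurable
lemma Gv_meas[measurable]: "(\<lambda>x. Gv m x k) \<in> borel_measurable borel"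
  unfolding Gv_def gg_def Ufun_def by measurable
lemma Hv_nonneg: "Hv m x \<ge> 0" by (simp add: Hv_def hh_nonneg)
lemma Hv_zero: "m \<ge> 1 \<Longrightarrow> Hv m 0 = 0" by (simp add: Hv_def hh_def Ufun_def)
lemma Gv_bound: "m \<ge> 1 \<Longrightarrow> \<bar>Gv m x k\<bar> \<le> 2 * (1 + Hv m x)"
  unfolding Gv_def Hv_def by (rule gg_bound) auto
lemma Hv_add: "m \<ge> 1 \<Longrightarrow> Hv m (x + y) \<le> Hv m x + (\<Sum>k\<in>UNIV. Gv m x k * y$k) + (2*real m - 1) * Hv m y"
proof -
  assume m: "m \<ge> 1"
  have e: "(\<lambda>k. (x+y)$k) = (\<lambda>k. x$k + y$k)" by auto
  show ?thesis unfolding Hv_def Gv_def e using smooth[of UNIV m "\<lambda>k. x$k" "\<lambda>k. y$k"] m by simp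
qed

lemma Hv_lower:
  fixes x :: "real^'p" assumes m: "m \<ge> 1"
  shows "(MAX k. \<bar>x$k\<bar>)^2 \<le> Hv m x"
proof -
  have "(MAX k. \<bar>x$k\<bar>) \<in> range (\<lambda>k. \<bar>x$k\<bar>)" by (rule Max_in) auto
  then obtain k0 where k0: "(MAX k. \<bar>x$k\<bar>) = \<bar>x$k0\<bar>" by blast
  have "x$k0^(2*m) \<le> (\<Sum>k\<in>UNIV. x$k^(2*m))"
    by (rule member_le_sum) (auto simp: zero_le_even_power)
  then have "(x$k0^(2*m)) powr (1/m) \<le> (\<Sum>k\<in>UNIV. x$k^(2*m)) powr (1/m)"
    by (intro powr_mono2) (auto simp: zero_le_even_power)
  then show ?thesis using pow_even_powr[OF m, of "x$k0"] k0
    by (simp add: Hv_def hh_def Ufun_def)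
qed

lemma Hv_upper:
  fixes x :: "real^'p" assumes m: "m \<ge> 1"
  shows "Hv m x \<le> real CARD('p) powr (1/m) * (MAX k. \<bar>x$k\<bar>)^2"
proof -
  define B where "B = (MAX k. \<bar>x$k\<bar>)"
  have B: "\<bar>x$k\<bar> \<le> B" for k unfolding B_def by (rule Max_ge) auto
  have "(\<Sum>k\<in>UNIV. x$k^(2*m)) \<le> (\<Sum>k\<in>(UNIV::'p set). (B^2)^m)"
  proof (rule sum_mono)
    fix k :: 'p
    have "x$k^(2*m) = \<bar>x$k\<bar>^(2*m)" by (simp add: power_even_abs)
    also have "\<dots> \<le> B^(2*m)" using B[of k] by (intro power_mono) auto
    finally show "x$k^(2*m) \<le> (B^2)^m" by (simp add: power_mult)
  qed
  also have "\<dots> = real CARD('p) * (B^2)^m" by simp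
  finally have le: "(\<Sum>k\<in>UNIV. x$k^(2*m)) \<le> real CARD('p) * (B^2)^m" .
  have "Hv m x \<le> (real CARD('p) * (B^2)^m) powr (1/m)"
    unfolding Hv_def hh_def Ufun_def using le by (intro powr_mono2) (auto intro!: sum_nonneg simp: zero_le_even_power)
  also have "\<dots> = real CARD('p) powr (1/m) * ((B^2)^m) powr (1/m)" by (rule powr_mult)
  also have "((B^2)^m) powr (1/m) = B^2"
    using pow_even_powr[OF m, of B] by (simp add: power_mult)
  finally show ?thesis by (simp add: B_def)
qed

lemma exp_two_a:
  fixes a :: real assumes "0 \<le> a"
  shows "exp (2*a) * (1 - a) \<le> 1 + a"
proof -
  define G where "G x = (1+x) * exp (-x) - (1-x) * exp x" for x :: real
  have "G 0 \<le> G a"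
  proof (rule DERIV_nonneg_imp_nondecreasing[OF assms])
    fix x :: real assume x: "0 \<le> x" "x \<le> a"
    have "DERIV G x :> x * (exp x - exp (-x))"
      unfolding G_def by (auto intro!: derivative_eq_intros simp: algebra_simps)
    moreover have "x * (exp x - exp (-x)) \<ge> 0" using x by simp
    ultimately show "\<exists>y. DERIV G x :> y \<and> y \<ge> 0" by blast
  qed
  then have "(1-a) * exp a \<le> (1+a) * exp (-a)" by (simp add: G_def)
  then have "(1-a) * exp a * exp a \<le> (1+a) * exp (-a) * exp a" by (simp add: mult_right_mono)
  moreover have "exp (-a) * exp a = 1" by (simp add: exp_minus field_simps)
  moreover have "exp a * exp a = exp (2*a)" by (simp add: exp_add[symmetric])
  ultimately show ?thesis by (simp add: algebra_simps)
qed

lemma const_bound: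
  fixes p :: nat assumes p: "p \<ge> 1"
  shows "(2 * real (max 1 (nat \<lfloor>ln (real p)\<rfloor>)) - 1) * real p powr (1 / real (max 1 (nat \<lfloor>ln (real p)\<rfloor>))) \<le> M_const p"
proof -
  define m where "m = max 1 (nat \<lfloor>ln (real p)\<rfloor>)"
  define L where "L = ln (real p)"
  have pp: "real p > 0" using p by simp
  have L0: "L \<ge> 0" using p by (simp add: L_def)
  have pe: "real p = exp L" using pp by (simp add: L_def)
  have m1: "m \<ge> 1" by (simp add: m_def)
  have pw: "real p powr (1/m) = exp (L/m)" using pp by (simp add: powr_def L_def)
  have "(2*real m - 1) * real p powr (1/real m) \<le> M_const p"
  proof (cases "L < 1")
    case True
    then have "\<lfloor>L\<rfloor> = 0" using L0 by (simp add: floor_eq_iff)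
    then have "m = 1" by (simp add: m_def L_def)
    moreover have "real p < 3" using pe True exp_le by (smt (verit) exp_less_mono)
    ultimately show ?thesis by (simp add: M_const_def)
  next
    case False
    then have fi: "\<lfloor>L\<rfloor> \<ge> 1" by (simp add: le_floor_iff)
    have "nat 1 \<le> nat \<lfloor>L\<rfloor>" by (rule nat_mono[OF fi])
    then have "Suc 0 \<le> nat \<lfloor>L\<rfloor>" by simp
    then have "m = nat \<lfloor>L\<rfloor>" unfolding m_def L_def[symmetric] by (simp add: max_def)
    then have mL: "real m = of_int \<lfloor>L\<rfloor>" using fi by simp
    have mle: "real m \<le> L" "L < real m + 1" using mL by linarith+
    have mpos: "real m \<ge> 1" using m1 by simp
    define s where "s = L / m - 1"
    define lam where "lam = m * s"
    have lam1: "lam = L - m" using mpos by (simp add: lam_def s_def field_simps)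
    have lam: "lam = L - m" "0 \<le> lam" "lam \<le> 1" using mle lam1 by auto
    have s_eq: "s = (1 - lam) * 0 + lam * (1/m)" using mpos by (simp add: lam_def)
    have "exp s \<le> (1 - lam) * exp 0 + lam * exp (1/m)"
      using convex_onD[OF exp_convex, of lam 0 "1/m"] lam s_eq by simp
    also have "exp (1/m) \<le> (2*real m+1)/(2*real m-1)"
    proof -
      have "exp (2 * (1/(2*m))) * (1 - 1/(2*m)) \<le> 1 + 1/(2*m)" by (rule exp_two_a) simp
      moreover have "2 * (1/(2*real m)) = 1/m" by simp
      ultimately have "exp (1/m) * (1 - 1/(2*m)) \<le> 1 + 1/(2*m)" by simp
      then have a: "2*real m * (exp (1/m) * (1 - 1/(2*m))) \<le> 2*real m * (1 + 1/(2*m))"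
        using mpos by (intro mult_left_mono) auto
      have b: "2*real m * (exp (1/m) * (1 - 1/(2*m))) = exp (1/m) * (2*real m-1)" using mpos by (simp add: field_simps)
      have c: "2*real m * (1 + 1/(2*m)) = 2*real m+1" using mpos by (simp add: field_simps)
      have "exp (1/m) * (2*real m-1) \<le> 2*real m+1" using a by (simp only: b c)
      moreover have "2*real m - 1 > 0" using mpos by simp
      ultimately show ?thesis by (simp add: pos_le_divide_eq)
    qed
    finally have es: "exp s \<le> (1 - lam) + lam * ((2*real m+1)/(2*real m-1))" using lam by (simp add: mult_left_mono)
    have "(2*real m - 1) * exp s \<le> (2*real m - 1) * ((1 - lam) + lam * ((2*real m+1)/(2*real m-1)))"
      using es mpos by (intro mult_left_mono) auto
    also have "\<dots> = 2*L - 1"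
    proof -
      have Lm: "L = lam + real m" using lam(1) by simp
      show ?thesis unfolding Lm using mpos by (simp add: field_simps)
    qed
    finally have k: "(2*real m - 1) * exp s \<le> 2*L - 1" .
    have "exp (L/m) = exp 1 * exp s" by (simp add: s_def exp_add[symmetric])
    then have "(2*real m - 1) * real p powr (1/m) = exp 1 * ((2*real m - 1) * exp s)" using pw by simp
    also have "\<dots> \<le> exp 1 * (2*L - 1)" using k by (simp add: mult_left_mono)
    also have "\<dots> = 2 * exp 1 * ln (real p) - exp 1" by (simp add: L_def algebra_simps)
    finally show ?thesis by (simp add: M_const_def)
  qed
  then show ?thesis by (simp only: m_def)
qed

lemma (in prob_space) step:
  fixes S X :: "'a \<Rightarrow> real^'p"
  assumes m: "m \<ge> 1"
    and S[measurable]: "S \<in> borel_measurable M" and X[measurable]: "X \<in> borel_measurable M"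
    and ind: "indep_var borel S borel X"
    and Xint: "\<And>k. integrable M (\<lambda>\<omega>. X \<omega> $ k)" and X0: "\<And>k. (\<integral>\<omega>. X \<omega> $ k \<partial>M) = 0"
    and HS: "integrable M (\<lambda>\<omega>. Hv m (S \<omega>))" and HX: "integrable M (\<lambda>\<omega>. Hv m (X \<omega>))"
  shows "integrable M (\<lambda>\<omega>. Hv m (S \<omega> + X \<omega>))"
    and "(\<integral>\<omega>. Hv m (S \<omega> + X \<omega>) \<partial>M) \<le> (\<integral>\<omega>. Hv m (S \<omega>) \<partial>M) + (2*real m - 1) * (\<integral>\<omega>. Hv m (X \<omega>) \<partial>M)"
proof -
  have c1: "integrable M (\<lambda>\<omega>. 2 * (1 + Hv m (S \<omega>)))"
    using HS by (intro integrable_mult_right integrable_add) auto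
  have Gint: "integrable M (\<lambda>\<omega>. Gv m (S \<omega>) k)" for k
  proof (rule Bochner_Integration.integrable_bound[OF c1])
    show "(\<lambda>\<omega>. Gv m (S \<omega>) k) \<in> borel_measurable M" by measurable
    show "AE \<omega> in M. norm (Gv m (S \<omega>) k) \<le> norm (2 * (1 + Hv m (S \<omega>)))"
    proof (intro AE_I2)
      fix \<omega>
      have "0 \<le> Hv m (S \<omega>)" by (rule Hv_nonneg)
      then show "norm (Gv m (S \<omega>) k) \<le> norm (2 * (1 + Hv m (S \<omega>)))"
        using Gv_bound[OF m, of "S \<omega>" k] by simp
    qed
  qed
  have vn: "(\<lambda>x::real^'p. x $ k) \<in> borel_measurable borel" for k by measurable
  have indk: "indep_var borel (\<lambda>\<omega>. Gv m (S \<omega>) k) borel (\<lambda>\<omega>. X \<omega> $ k)" for k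
    using indep_var_compose[OF ind Gv_meas[of m k] vn[of k]] by (simp add: comp_def)
  have prod0: "(\<integral>\<omega>. Gv m (S \<omega>) k * X \<omega> $ k \<partial>M) = 0" for k
    using indep_var_lebesgue_integral[OF indk Gint Xint] X0 by simp
  have prodint: "integrable M (\<lambda>\<omega>. Gv m (S \<omega>) k * X \<omega> $ k)" for k
    using indep_var_integrable[OF indk Gint Xint] .
  define R where "R \<omega> = Hv m (S \<omega>) + (\<Sum>k\<in>UNIV. Gv m (S \<omega>) k * X \<omega> $ k) + (2*real m - 1) * Hv m (X \<omega>)" for \<omega>
  have Rint: "integrable M R"
    unfolding R_def using HS HX prodint by (intro Bochner_Integration.integrable_add Bochner_Integration.integrable_sum Bochner_Integration.integrable_mult_right) auto
  have le: "Hv m (S \<omega> + X \<omega>) \<le> R \<omega>" for \<omega> unfolding R_def by (rule Hv_add[OF m])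
  show int: "integrable M (\<lambda>\<omega>. Hv m (S \<omega> + X \<omega>))"
  proof (rule Bochner_Integration.integrable_bound[OF Rint])
    show "(\<lambda>\<omega>. Hv m (S \<omega> + X \<omega>)) \<in> borel_measurable M" by measurable
    show "AE \<omega> in M. norm (Hv m (S \<omega> + X \<omega>)) \<le> norm (R \<omega>)"
    proof (intro AE_I2)
      fix \<omega>
      have "0 \<le> Hv m (S \<omega> + X \<omega>)" by (rule Hv_nonneg)
      then show "norm (Hv m (S \<omega> + X \<omega>)) \<le> norm (R \<omega>)" using le[of \<omega>] by simp
    qed
  qed
  have "(\<integral>\<omega>. Hv m (S \<omega> + X \<omega>) \<partial>M) \<le> (\<integral>\<omega>. R \<omega> \<partial>M)"
    by (rule integral_mono[OF int Rint le])
  also have "(\<integral>\<omega>. R \<omega> \<partial>M) = (\<integral>\<omega>. Hv m (S \<omega>) \<partial>M) + (\<Sum>k\<in>UNIV. (\<integral>\<omega>. Gv m (S \<omega>) k * X \<omega> $ k \<partial>M)) + (2*real m - 1) * (\<integral>\<omega>. Hv m (X \<omega>) \<partial>M)"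
    unfolding R_def using HS HX prodint
    by (simp add: integral_add integral_sum integrable_sum integrable_add)
  also have "(\<Sum>k\<in>UNIV. (\<integral>\<omega>. Gv m (S \<omega>) k * X \<omega> $ k \<partial>M)) = 0" by (simp add: prod0)
  finally show "(\<integral>\<omega>. Hv m (S \<omega> + X \<omega>) \<partial>M) \<le> (\<integral>\<omega>. Hv m (S \<omega>) \<partial>M) + (2*real m - 1) * (\<integral>\<omega>. Hv m (X \<omega>) \<partial>M)" by simp
qed

lemma (in prob_space) dep_indep:
  fixes \<xi> :: "'i \<Rightarrow> 'a \<Rightarrow> real^'p"
  assumes dep: "dependency_graph M N E \<xi>" and A: "A \<subseteq> N" and fin: "finite A"
    and j: "j \<in> N - closed_nbhd_set N E A"
  shows "indep_var borel (\<lambda>\<omega>. \<Sum>i\<in>A. \<xi> i \<omega>) borel (\<xi> j)"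
proof -
  define B where "B = N - closed_nbhd_set N E A"
  have ind: "indep_var (PiM A (\<lambda>_. borel)) (\<lambda>\<omega>. \<lambda>i\<in>A. \<xi> i \<omega>) (PiM B (\<lambda>_. borel)) (\<lambda>\<omega>. \<lambda>i\<in>B. \<xi> i \<omega>)"
    using dep A unfolding dependency_graph_def B_def by blast
  have m1: "(\<lambda>f. \<Sum>i\<in>A. f i) \<in> borel_measurable (PiM A (\<lambda>_. borel :: (real^'p) measure))"
    by (rule borel_measurable_sum) (rule measurable_component_singleton, simp)
  have m2: "(\<lambda>f. f j) \<in> borel_measurable (PiM B (\<lambda>_. borel :: (real^'p) measure))"
    by (rule measurable_component_singleton) (use j in \<open>simp add: B_def\<close>)
  have "indep_var borel ((\<lambda>f. \<Sum>i\<in>A. f i) \<circ> (\<lambda>\<omega>. \<lambda>i\<in>A. \<xi> i \<omega>)) borel ((\<lambda>f. f j) \<circ> (\<lambda>\<omega>. \<lambda>i\<in>B. \<xi> i \<omega>))"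
    by (rule indep_var_compose[OF ind m1 m2])
  moreover have "((\<lambda>f. \<Sum>i\<in>A. f i) \<circ> (\<lambda>\<omega>. \<lambda>i\<in>A. \<xi> i \<omega>)) = (\<lambda>\<omega>. \<Sum>i\<in>A. \<xi> i \<omega>)"
    by (rule ext) (simp add: comp_def)
  moreover have "((\<lambda>f. f j) \<circ> (\<lambda>\<omega>. \<lambda>i\<in>B. \<xi> i \<omega>)) = \<xi> j"
    using j by (auto simp: B_def comp_def)
  ultimately show ?thesis by simp
qed

lemma (in prob_space) edgefree_bound:
  fixes \<xi> :: "'i \<Rightarrow> 'a \<Rightarrow> real^'p"
  assumes m: "m \<ge> 1"
    and meas: "\<And>i. i \<in> N \<Longrightarrow> \<xi> i \<in> borel_measurable M"
    and mean0: "\<And>i k. i \<in> N \<Longrightarrow> integrable M (\<lambda>\<omega>. \<xi> i \<omega> $ k) \<and> (\<integral>\<omega>. \<xi> i \<omega> $ k \<partial>M) = 0"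
    and HX: "\<And>i. i \<in> N \<Longrightarrow> integrable M (\<lambda>\<omega>. Hv m (\<xi> i \<omega>))"
    and dep: "dependency_graph M N E \<xi>"
  shows "finite C \<Longrightarrow> C \<subseteq> N \<Longrightarrow> (\<forall>i\<in>C. \<forall>j\<in>C. \<not> E i j) \<Longrightarrow>
    integrable M (\<lambda>\<omega>. Hv m (\<Sum>i\<in>C. \<xi> i \<omega>)) \<and>
    (\<integral>\<omega>. Hv m (\<Sum>i\<in>C. \<xi> i \<omega>) \<partial>M) \<le> (2*real m - 1) * (\<Sum>i\<in>C. \<integral>\<omega>. Hv m (\<xi> i \<omega>) \<partial>M)"
proof (induction C rule: finite_induct)
  case empty
  then show ?case by (simp add: Hv_zero[OF m])
next
  case (insert j C)
  then have IH: "integrable M (\<lambda>\<omega>. Hv m (\<Sum>i\<in>C. \<xi> i \<omega>))"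
    "(\<integral>\<omega>. Hv m (\<Sum>i\<in>C. \<xi> i \<omega>) \<partial>M) \<le> (2*real m - 1) * (\<Sum>i\<in>C. \<integral>\<omega>. Hv m (\<xi> i \<omega>) \<partial>M)"
    by auto
  have jN: "j \<in> N" and CN: "C \<subseteq> N" using insert by auto
  have jcl: "j \<in> N - closed_nbhd_set N E C"
    using insert jN unfolding closed_nbhd_set_def nbhd_def by auto
  have ind: "indep_var borel (\<lambda>\<omega>. \<Sum>i\<in>C. \<xi> i \<omega>) borel (\<xi> j)"
    by (rule dep_indep[OF dep CN insert(1) jcl])
  have Smeas: "(\<lambda>\<omega>. \<Sum>i\<in>C. \<xi> i \<omega>) \<in> borel_measurable M"
    using meas CN by (intro borel_measurable_sum) auto
  note st = step[OF m Smeas meas[OF jN] ind conjunct1[OF mean0[OF jN]] conjunct2[OF mean0[OF jN]] IH(1) HX[OF jN]]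
  have e: "(\<lambda>\<omega>. Hv m (\<Sum>i\<in>insert j C. \<xi> i \<omega>)) = (\<lambda>\<omega>. Hv m ((\<Sum>i\<in>C. \<xi> i \<omega>) + \<xi> j \<omega>))"
    using insert(1,2) by (simp add: add.commute)
  show ?case
  proof
    show "integrable M (\<lambda>\<omega>. Hv m (\<Sum>i\<in>insert j C. \<xi> i \<omega>))" unfolding e by (rule st(1))
    have "(\<integral>\<omega>. Hv m (\<Sum>i\<in>insert j C. \<xi> i \<omega>) \<partial>M)
        \<le> (\<integral>\<omega>. Hv m (\<Sum>i\<in>C. \<xi> i \<omega>) \<partial>M) + (2*real m - 1) * (\<integral>\<omega>. Hv m (\<xi> j \<omega>) \<partial>M)"
      unfolding e by (rule st(2))
    also have "\<dots> \<le> (2*real m - 1) * (\<Sum>i\<in>C. \<integral>\<omega>. Hv m (\<xi> i \<omega>) \<partial>M) + (2*real m - 1) * (\<integral>\<omega>. Hv m (\<xi> j \<omega>) \<partial>M)"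
      using IH(2) by simp
    also have "\<dots> = (2*real m - 1) * (\<Sum>i\<in>insert j C. \<integral>\<omega>. Hv m (\<xi> i \<omega>) \<partial>M)"
      using insert(1,2) by (simp add: algebra_simps)
    finally show "(\<integral>\<omega>. Hv m (\<Sum>i\<in>insert j C. \<xi> i \<omega>) \<partial>M) \<le> (2*real m - 1) * (\<Sum>i\<in>insert j C. \<integral>\<omega>. Hv m (\<xi> i \<omega>) \<partial>M)" .
  qed
qed

lemma coloring:
  assumes ug: "undirected_graph N E" and deg: "\<forall>i\<in>N. card (nbhd N E i) \<le> d" and finN: "finite N"
  shows "finite F \<Longrightarrow> F \<subseteq> N \<Longrightarrow> \<exists>col::'i\<Rightarrow>nat. (\<forall>i\<in>F. col i \<le> d) \<and> (\<forall>i\<in>F. \<forall>j\<in>F. E i j \<longrightarrow> col i \<noteq> col j)"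
proof (induction F rule: finite_induct)
  case empty then show ?case by auto
next
  case (insert a F)
  then obtain col where col: "\<forall>i\<in>F. col i \<le> d" "\<forall>i\<in>F. \<forall>j\<in>F. E i j \<longrightarrow> col i \<noteq> col j" by auto
  have aN: "a \<in> N" using insert by auto
  define used where "used = col ` (nbhd N E a \<inter> F)"
  have fnb: "finite (nbhd N E a)" using finN by (simp add: nbhd_def)
  have "card used \<le> card (nbhd N E a \<inter> F)" unfolding used_def by (rule card_image_le) (use fnb in auto)
  also have "\<dots> \<le> card (nbhd N E a)" by (rule card_mono[OF fnb]) auto
  also have "\<dots> \<le> d" using deg aN by auto
  finally have cu: "card used \<le> d" .
  have "\<exists>c\<in>{..d}. c \<notin> used"
  proof (rule ccontr)
    assume "\<not> ?thesis"
    then have "{..d} \<subseteq> used" by auto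
    moreover have "finite used" using fnb by (simp add: used_def)
    ultimately have "card {..d} \<le> card used" by (rule card_mono[rotated])
    then show False using cu by simp
  qed
  then obtain c where c: "c \<le> d" "c \<notin> used" by auto
  define col' where "col' = col(a := c)"
  have irr: "\<not> E a a" using ug by (simp add: undirected_graph_def)
  have sym: "E i j \<Longrightarrow> E j i" for i j using ug by (simp add: undirected_graph_def)
  have nb: "j \<in> F \<Longrightarrow> E a j \<Longrightarrow> col j \<in> used" for j
    using insert(4) by (auto simp: used_def nbhd_def)
  show ?case
  proof (intro exI[of _ col'] conjI ballI impI)
    fix i assume "i \<in> insert a F" then show "col' i \<le> d" using col c by (auto simp: col'_def)
  next
    fix i j assume i: "i \<in> insert a F" and j: "j \<in> insert a F" and e: "E i j"
    show "col' i \<noteq> col' j"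
    proof (cases "i = a")
      case True
      then have "j \<noteq> a" using e irr by auto
      then have "j \<in> F" using j by auto
      then show ?thesis using True nb[of j] e c insert(2) by (auto simp: col'_def)
    next
      case False
      then have iF: "i \<in> F" using i by auto
      show ?thesis
      proof (cases "j = a")
        case True
        then show ?thesis using iF nb[of i] sym[OF e] c insert(2) False by (auto simp: col'_def)
      next
        case False
        then show ?thesis using iF j col(2) e \<open>i \<noteq> a\<close> by (auto simp: col'_def)
      qed
    qed
  qed
qed

lemma max_sum_bound:
  fixes T :: "nat \<Rightarrow> real^'p"
  assumes m: "m \<ge> 1"
  shows "(MAX k. \<bar>(\<Sum>c\<in>{..d}. T c) $ k\<bar>)^2 \<le> (real d + 1) * (\<Sum>c\<in>{..d}. Hv m (T c))"
proof -
  define a where "a c = (MAX k. \<bar>T c $ k\<bar>)" for c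
  have ak: "\<bar>T c $ k\<bar> \<le> a c" for c k unfolding a_def by (rule Max_ge) auto
  have "\<bar>(\<Sum>c\<in>{..d}. T c) $ k\<bar> \<le> (\<Sum>c\<in>{..d}. a c)" for k
  proof -
    have "\<bar>(\<Sum>c\<in>{..d}. T c) $ k\<bar> = \<bar>\<Sum>c\<in>{..d}. T c $ k\<bar>" by simp
    also have "\<dots> \<le> (\<Sum>c\<in>{..d}. \<bar>T c $ k\<bar>)" by (rule sum_abs)
    also have "\<dots> \<le> (\<Sum>c\<in>{..d}. a c)" by (rule sum_mono) (rule ak)
    finally show ?thesis .
  qed
  then have le1: "(MAX k. \<bar>(\<Sum>c\<in>{..d}. T c) $ k\<bar>) \<le> (\<Sum>c\<in>{..d}. a c)"
    by (subst Max_le_iff) auto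
  have ge0: "0 \<le> (MAX k. \<bar>(\<Sum>c\<in>{..d}. T c) $ k\<bar>)"
    by (rule order_trans[OF abs_ge_zero Max_ge]) auto
  have "(MAX k. \<bar>(\<Sum>c\<in>{..d}. T c) $ k\<bar>)^2 \<le> (\<Sum>c\<in>{..d}. a c)^2"
    by (rule power_mono[OF le1 ge0])
  also have "(\<Sum>c\<in>{..d}. a c)^2 = (\<Sum>c\<in>{..d}. a c * 1)^2" by simp
  also have "\<dots> \<le> (\<Sum>c\<in>{..d}. (a c)^2) * (\<Sum>c\<in>{..d}. (1::real)^2)" by (rule Cauchy_Schwarz_ineq_sum)
  also have "(\<Sum>c\<in>{..d}. (1::real)^2) = real d + 1" by simp
  also have "(\<Sum>c\<in>{..d}. (a c)^2) \<le> (\<Sum>c\<in>{..d}. Hv m (T c))"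
    unfolding a_def by (rule sum_mono) (rule Hv_lower[OF m])
  finally show ?thesis by (simp add: mult.commute)
qed

theorem lemmaB3:
  fixes M :: "'a measure" and N :: "'i set" and E :: "'i \<Rightarrow> 'i \<Rightarrow> bool"
    and \<xi> :: "'i \<Rightarrow> 'a \<Rightarrow> real ^ 'p"
  assumes "prob_space M"
    and "finite N"
    and meas: "\<And>i. i \<in> N \<Longrightarrow> \<xi> i \<in> borel_measurable M"
    and mean0: "\<And>i k. i \<in> N \<Longrightarrow> integrable M (\<lambda>\<omega>. \<xi> i \<omega> $ k) \<and> (\<integral>\<omega>. \<xi> i \<omega> $ k \<partial>M) = 0"
    and mom2: "\<And>i. i \<in> N \<Longrightarrow> integrable M (\<lambda>\<omega>. (MAX k. \<bar>\<xi> i \<omega> $ k\<bar>)\<^sup>2)"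
    and dep: "dependency_graph M N E \<xi>"
  shows "(\<integral>\<omega>. (MAX k. \<bar>\<Sum>i\<in>N. \<xi> i \<omega> $ k\<bar>)\<^sup>2 \<partial>M)
           \<le> (real (max_degree N E) + 1)\<^sup>2 * M_const CARD('p)
              * (\<Sum>i\<in>N. \<integral>\<omega>. (MAX k. \<bar>\<xi> i \<omega> $ k\<bar>)\<^sup>2 \<partial>M)"
proof -
  interpret prob_space M by fact
  note finN = \<open>finite N\<close>
  define p where "p = CARD('p)"
  define m where "m = max 1 (nat \<lfloor>ln (real p)\<rfloor>)"
  have m: "m \<ge> 1" by (simp add: m_def)
  have p1: "p \<ge> 1" unfolding p_def by (simp add: Suc_le_eq)
  define Sig where "Sig = (\<Sum>i\<in>N. \<integral>\<omega>. (MAX k. \<bar>\<xi> i \<omega> $ k\<bar>)\<^sup>2 \<partial>M)"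
  have Sig0: "Sig \<ge> 0" unfolding Sig_def by (intro sum_nonneg integral_nonneg_AE) auto
  have Mc: "M_const p \<ge> 3" by (simp add: M_const_def)
  have HX: "integrable M (\<lambda>\<omega>. Hv m (\<xi> i \<omega>))" if i: "i \<in> N" for i
  proof (rule Bochner_Integration.integrable_bound)
    show "integrable M (\<lambda>\<omega>. real CARD('p) powr (1/m) * (MAX k. \<bar>\<xi> i \<omega> $ k\<bar>)\<^sup>2)"
      using mom2[OF i] by (rule Bochner_Integration.integrable_mult_right)
    show "(\<lambda>\<omega>. Hv m (\<xi> i \<omega>)) \<in> borel_measurable M"
      using meas[OF i] by measurable
    show "AE \<omega> in M. norm (Hv m (\<xi> i \<omega>)) \<le> norm (real CARD('p) powr (1/m) * (MAX k. \<bar>\<xi> i \<omega> $ k\<bar>)\<^sup>2)"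
    proof (intro AE_I2)
      fix \<omega>
      have "0 \<le> Hv m (\<xi> i \<omega>)" by (rule Hv_nonneg)
      then show "norm (Hv m (\<xi> i \<omega>)) \<le> norm (real CARD('p) powr (1/m) * (MAX k. \<bar>\<xi> i \<omega> $ k\<bar>)\<^sup>2)"
        using Hv_upper[OF m, of "\<xi> i \<omega>"] by simp
    qed
  qed
  have HXle: "(\<Sum>i\<in>N. \<integral>\<omega>. Hv m (\<xi> i \<omega>) \<partial>M) \<le> real p powr (1/m) * Sig"
  proof -
    have "(\<Sum>i\<in>N. \<integral>\<omega>. Hv m (\<xi> i \<omega>) \<partial>M) \<le> (\<Sum>i\<in>N. \<integral>\<omega>. real p powr (1/m) * (MAX k. \<bar>\<xi> i \<omega> $ k\<bar>)\<^sup>2 \<partial>M)"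
    proof (rule sum_mono)
      fix i assume i: "i \<in> N"
      show "(\<integral>\<omega>. Hv m (\<xi> i \<omega>) \<partial>M) \<le> (\<integral>\<omega>. real p powr (1/m) * (MAX k. \<bar>\<xi> i \<omega> $ k\<bar>)\<^sup>2 \<partial>M)"
        using HX[OF i] mom2[OF i] Hv_upper[OF m] unfolding p_def
        by (intro integral_mono) auto
    qed
    also have "\<dots> = real p powr (1/m) * Sig" by (simp add: Sig_def sum_distrib_left)
    finally show ?thesis .
  qed
  show ?thesis
  proof (cases "N = {}")
    case True then show ?thesis by simp
  next
    case False
    define d where "d = max_degree N E"
    have ug: "undirected_graph N E" using dep by (simp add: dependency_graph_def)
    have deg: "\<forall>i\<in>N. card (nbhd N E i) \<le> d"
      unfolding d_def max_degree_def using finN by auto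
    obtain col where col: "\<forall>i\<in>N. col i \<le> d" "\<forall>i\<in>N. \<forall>j\<in>N. E i j \<longrightarrow> col i \<noteq> col j"
      using coloring[OF ug deg finN finN] by blast
    define C where "C c = {i \<in> N. col i = c}" for c
    have Cf: "finite (C c)" "C c \<subseteq> N" "\<forall>i\<in>C c. \<forall>j\<in>C c. \<not> E i j" for c
    proof -
      show "finite (C c)" using finN by (simp add: C_def)
      show "C c \<subseteq> N" by (auto simp: C_def)
      show "\<forall>i\<in>C c. \<forall>j\<in>C c. \<not> E i j"
      proof (intro ballI)
        fix i j assume "i \<in> C c" "j \<in> C c"
        then have "i \<in> N" "j \<in> N" "col i = col j" by (auto simp: C_def)
        then show "\<not> E i j" using col(2) by blast
      qed
    qed
    define T where "T c \<omega> = (\<Sum>i\<in>C c. \<xi> i \<omega>)" for c \<omega>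
    have EF: "integrable M (\<lambda>\<omega>. Hv m (T c \<omega>)) \<and>
        (\<integral>\<omega>. Hv m (T c \<omega>) \<partial>M) \<le> (2*real m - 1) * (\<Sum>i\<in>C c. \<integral>\<omega>. Hv m (\<xi> i \<omega>) \<partial>M)" for c
      unfolding T_def
      by (rule edgefree_bound[OF m meas mean0 HX dep Cf(1) Cf(2) Cf(3)])
    have grp: "(\<Sum>c\<in>{..d}. \<Sum>i\<in>C c. f i) = (\<Sum>i\<in>N. f i)" for f :: "'i \<Rightarrow> 'b::comm_monoid_add"
      unfolding C_def by (rule sum.group[OF finN]) (use col(1) in auto)
    have decomp: "(\<Sum>i\<in>N. \<xi> i \<omega>) = (\<Sum>c\<in>{..d}. T c \<omega>)" for \<omega>
      unfolding T_def by (rule grp[symmetric])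
    define L where "L \<omega> = (MAX k. \<bar>\<Sum>i\<in>N. \<xi> i \<omega> $ k\<bar>)\<^sup>2" for \<omega>
    define R where "R \<omega> = (real d + 1) * (\<Sum>c\<in>{..d}. Hv m (T c \<omega>))" for \<omega>
    have LR: "L \<omega> \<le> R \<omega>" for \<omega>
    proof -
      have "L \<omega> = (MAX k. \<bar>(\<Sum>c\<in>{..d}. T c \<omega>) $ k\<bar>)\<^sup>2"
        unfolding L_def decomp[symmetric] by simp
      also have "\<dots> \<le> R \<omega>" unfolding R_def by (rule max_sum_bound[OF m])
      finally show ?thesis .
    qed
    have Rint: "integrable M R"
      unfolding R_def using EF by (intro Bochner_Integration.integrable_mult_right Bochner_Integration.integrable_sum) auto
    have Smeas: "(\<lambda>\<omega>. \<Sum>i\<in>N. \<xi> i \<omega>) \<in> borel_measurable M"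
      using meas by (intro borel_measurable_sum) auto
    have Lmeas: "L \<in> borel_measurable M"
    proof -
      have f: "(\<lambda>x::real^'p. (MAX k. \<bar>x $ k\<bar>)\<^sup>2) \<in> borel_measurable borel" by measurable
      have "(\<lambda>\<omega>. (\<lambda>x::real^'p. (MAX k. \<bar>x $ k\<bar>)\<^sup>2) (\<Sum>i\<in>N. \<xi> i \<omega>)) \<in> borel_measurable M"
        by (rule measurable_compose[OF Smeas f])
      then show ?thesis unfolding L_def by simp
    qed
    have Lint: "integrable M L"
    proof (rule Bochner_Integration.integrable_bound[OF Rint Lmeas])
      show "AE \<omega> in M. norm (L \<omega>) \<le> norm (R \<omega>)"
      proof (intro AE_I2)
        fix \<omega>
        have "0 \<le> L \<omega>" by (simp add: L_def)
        then show "norm (L \<omega>) \<le> norm (R \<omega>)" using LR[of \<omega>] by simp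
      qed
    qed
    have "(\<integral>\<omega>. L \<omega> \<partial>M) \<le> (\<integral>\<omega>. R \<omega> \<partial>M)" by (rule integral_mono[OF Lint Rint LR])
    also have "(\<integral>\<omega>. R \<omega> \<partial>M) = (real d + 1) * (\<Sum>c\<in>{..d}. \<integral>\<omega>. Hv m (T c \<omega>) \<partial>M)"
      unfolding R_def using EF by (simp add: integral_sum)
    also have "\<dots> \<le> (real d + 1) * (\<Sum>c\<in>{..d}. (2*real m - 1) * (\<Sum>i\<in>C c. \<integral>\<omega>. Hv m (\<xi> i \<omega>) \<partial>M))"
      using EF by (intro mult_left_mono sum_mono) auto
    also have "(\<Sum>c\<in>{..d}. (2*real m - 1) * (\<Sum>i\<in>C c. \<integral>\<omega>. Hv m (\<xi> i \<omega>) \<partial>M))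
        = (2*real m - 1) * (\<Sum>i\<in>N. \<integral>\<omega>. Hv m (\<xi> i \<omega>) \<partial>M)"
      by (simp add: sum_distrib_left[symmetric] grp)
    also have "(real d + 1) * ((2*real m - 1) * (\<Sum>i\<in>N. \<integral>\<omega>. Hv m (\<xi> i \<omega>) \<partial>M))
        \<le> (real d + 1) * ((2*real m - 1) * (real p powr (1/m) * Sig))"
      using HXle m by (intro mult_left_mono) auto
    also have "\<dots> = (real d + 1) * (((2*real m - 1) * real p powr (1/m)) * Sig)" by (simp add: mult.assoc)
    also have "\<dots> \<le> (real d + 1) * (M_const p * Sig)"
      using const_bound[OF p1] Sig0 unfolding m_def by (intro mult_left_mono mult_right_mono) auto
    also have "\<dots> \<le> (real d + 1)^2 * M_const p * Sig"
    proof -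
      have "0 \<le> M_const p * Sig" using Mc Sig0 by simp
      moreover have "real d + 1 \<le> (real d + 1)^2" by (simp add: power2_eq_square)
      ultimately have "(real d + 1) * (M_const p * Sig) \<le> (real d + 1)^2 * (M_const p * Sig)"
        by (rule mult_right_mono[rotated])
      then show ?thesis by (simp add: mult.assoc)
    qed
    finally show ?thesis unfolding L_def d_def p_def Sig_def .
  qed
qed

end
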